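(* For any complex numbers $a,b$ and any natural number $n\ge1$, \[ \Psi(a,b,n)=\sum_{i=0}^{\lfloor n/2\rfloor}\frac{n}{n-i}\binom{n-i}{i}(-a)^i(2a-b)^{\lfloor n/2\rfloor-i},\qquad \Phi(a,b,n)=\sum_{i=0}^{\lfloor (n-1)/2\rfloor}\binom{n-i-1}{i}(-a)^i(2a-b)^{\lfloor (n-1)/2\rfloor-i}. \]
   Context: $\delta(m)=1$ for $m$ odd and $0$ for $m$ even; $\lfloor\cdot\rfloor$ is the floor. $\Psi(a,b,n)$, $\Phi(a,b,n)$ are defined by $\Psi(a,b,0)=2$, $\Psi(a,b,1)=1$, $\Psi(a,b,n+1)=(2a-b)^{\delta(n)}\Psi(a,b,n)-a\Psi(a,b,n-1)$ and $\Phi(a,b,0)=0$, $\Phi(a,b,1)=1$, $\Phi(a,b,n+1)=(2a-b)^{\delta(n+1)}\Phi(a,b,n)-a\Phi(a,b,n-1)$ for $n\ge1$. *)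

theory Defs
  imports Complex_Main
begin

definition delta :: "nat \<Rightarrow> nat" where
  "delta m = (if odd m then 1 else 0)"

fun Psi :: "complex \<Rightarrow> complex \<Rightarrow> nat \<Rightarrow> complex" where
  "Psi a b 0 = 2"
| "Psi a b (Suc 0) = 1"
| "Psi a b (Suc (Suc n)) =
     (2*a - b) ^ delta (Suc n) * Psi a b (Suc n) - a * Psi a b n"

fun Phi :: "complex \<Rightarrow> complex \<Rightarrow> nat \<Rightarrow> complex" where
  "Phi a b 0 = 0"
| "Phi a b (Suc 0) = 1"
| "Phi a b (Suc (Suc n)) =
     (2*a - b) ^ delta (Suc (Suc n)) * Phi a b (Suc n) - a * Phi a b n"

end

theory Submission
  imports Defs
begin

definition Asum :: "complex \<Rightarrow> complex \<Rightarrow> nat \<Rightarrow> complex" where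
  "Asum a b m = (\<Sum>i\<le>m. of_nat ((2*m-i) choose i) * (-a)^i * (2*a-b)^(m-i))"
definition Bsum :: "complex \<Rightarrow> complex \<Rightarrow> nat \<Rightarrow> complex" where
  "Bsum a b m = (\<Sum>i\<le>m. of_nat ((2*m+1-i) choose i) * (-a)^i * (2*a-b)^(m-i))"

lemma pascal_if: "i \<le> N \<Longrightarrow> ((Suc N - i) choose i) = ((N - i) choose i) + (if i = 0 then 0 else ((N - i) choose (i - 1)))"
proof (cases i)
  case (Suc k)
  assume "i \<le> N"
  with Suc have "N - k = Suc (N - Suc k)" by arith
  with Suc show ?thesis by simp
qed simp

lemma shift_if: "(\<Sum>i\<le>Suc m. (if i = 0 then 0 else f i) :: complex) = (\<Sum>j\<le>m. f (Suc j))"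
  by (simp only: sum.atMost_Suc_shift) simp

lemma A_step: "Asum a b (Suc m) = (2*a-b) * Bsum a b m - a * Asum a b m"
proof -
  let ?c = "2*a-b"
  have "Asum a b (Suc m) = (\<Sum>i\<le>Suc m. of_nat ((2*m+1-i) choose i) * (-a)^i * ?c^(Suc m-i))
      + (\<Sum>i\<le>Suc m. (if i = 0 then 0 else of_nat ((2*m+1-i) choose (i-1)) * (-a)^i * ?c^(Suc m-i)))"
    unfolding Asum_def sum.distrib[symmetric]
    apply (rule sum.cong[OF refl])
    using pascal_if[of _ "2*m+1"] by (auto simp: algebra_simps)
  also have "(\<Sum>i\<le>Suc m. of_nat ((2*m+1-i) choose i) * (-a)^i * ?c^(Suc m-i)) = ?c * Bsum a b m"
    unfolding Bsum_def sum_distrib_left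
    by (simp add: Suc_diff_le algebra_simps)
  also have "(\<Sum>i\<le>Suc m. (if i = 0 then 0 else of_nat ((2*m+1-i) choose (i-1)) * (-a)^i * ?c^(Suc m-i)))
      = - a * Asum a b m"
    unfolding shift_if Asum_def sum_distrib_left
    by (rule sum.cong[OF refl]) (simp add: algebra_simps)
  finally show ?thesis by simp
qed

lemma B_step: "Bsum a b (Suc m) = Asum a b (Suc m) - a * Bsum a b m"
proof -
  let ?c = "2*a-b"
  have "Bsum a b (Suc m) = (\<Sum>i\<le>Suc m. of_nat ((2*m+2-i) choose i) * (-a)^i * ?c^(Suc m-i))
      + (\<Sum>i\<le>Suc m. (if i = 0 then 0 else of_nat ((2*m+2-i) choose (i-1)) * (-a)^i * ?c^(Suc m-i)))"
    unfolding Bsum_def sum.distrib[symmetric]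
    apply (rule sum.cong[OF refl])
    using pascal_if[of _ "2*m+2"] by (auto simp: algebra_simps)
  also have "(\<Sum>i\<le>Suc m. of_nat ((2*m+2-i) choose i) * (-a)^i * ?c^(Suc m-i)) = Asum a b (Suc m)"
    unfolding Asum_def by simp
  also have "(\<Sum>i\<le>Suc m. (if i = 0 then 0 else of_nat ((2*m+2-i) choose (i-1)) * (-a)^i * ?c^(Suc m-i)))
      = - a * Bsum a b m"
    unfolding shift_if Bsum_def sum_distrib_left
    by (rule sum.cong[OF refl]) (simp add: algebra_simps)
  finally show ?thesis by simp
qed

lemma Phi_AB: "Phi a b (2*m+1) = Asum a b m \<and> Phi a b (2*m+2) = Bsum a b m"
proof (induction m)
  case 0
  then show ?case by (simp add: Asum_def Bsum_def delta_def)
next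
  case (Suc m)
  have e1: "2 * Suc m + 1 = Suc (Suc (2*m+1))" by simp
  have e2: "2 * Suc m + 2 = Suc (Suc (2*m+2))" by simp
  have d1: "delta (Suc (Suc (Suc (2*m)))) = 1" by (simp add: delta_def)
  have d2: "delta (Suc (Suc (Suc (Suc (2*m))))) = 0" by (simp add: delta_def)
  have h1: "Phi a b (2 * Suc m + 1) = Asum a b (Suc m)"
    unfolding e1 Phi.simps using Suc.IH
    by (simp only: A_step) (simp add: d1 del: Phi.simps)
  moreover have "Phi a b (2 * Suc m + 2) = Bsum a b (Suc m)"
    unfolding e2 Phi.simps using Suc.IH h1 e1
    by (simp only: B_step d2) (simp add: d2 del: Phi.simps)
  ultimately show ?case by simp
qed

lemma Psi_Phi_aux: "Psi a b (Suc n) = Phi a b (Suc (Suc n)) - a * Phi a b n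
   \<and> Psi a b (Suc (Suc n)) = Phi a b (Suc (Suc (Suc n))) - a * Phi a b (Suc n)"
proof (induction n)
  case 0
  then show ?case by (simp add: delta_def)
next
  case (Suc n)
  have d: "delta (Suc (Suc (Suc (Suc n)))) = delta (Suc (Suc n))" by (simp add: delta_def)
  let ?c = "2*a-b"
  have IH1: "Psi a b (Suc n) = Phi a b (Suc (Suc n)) - a * Phi a b n"
   and IH2: "Psi a b (Suc (Suc n)) = Phi a b (Suc (Suc (Suc n))) - a * Phi a b (Suc n)" using Suc.IH by auto
  have r1: "Psi a b (Suc (Suc (Suc n))) = ?c ^ delta (Suc (Suc n)) * Psi a b (Suc (Suc n)) - a * Psi a b (Suc n)"
    by (rule Psi.simps(3))
  have r2: "Phi a b (Suc (Suc (Suc (Suc n)))) = ?c ^ delta (Suc (Suc (Suc (Suc n)))) * Phi a b (Suc (Suc (Suc n))) - a * Phi a b (Suc (Suc n))"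
    by (rule Phi.simps(3))
  have r3: "Phi a b (Suc (Suc n)) = ?c ^ delta (Suc (Suc n)) * Phi a b (Suc n) - a * Phi a b n"
    by (rule Phi.simps(3))
  have "Psi a b (Suc (Suc (Suc n))) = Phi a b (Suc (Suc (Suc (Suc n)))) - a * Phi a b (Suc (Suc n))"
    unfolding r1 r2 IH1 IH2 d
    by (subst (2) r3) (simp only: algebra_simps)
  with IH2 show ?case by blast
qed


lemma coef:
  assumes "n \<ge> 1" "i \<le> n div 2"
  shows "(of_nat n / of_nat (n - i) * of_nat ((n - i) choose i) :: complex)
     = of_nat ((n - i) choose i) + (if i = 0 then 0 else of_nat ((n - i - 1) choose (i - 1)))"
proof (cases i)
  case 0
  then show ?thesis using assms by simp
next
  case (Suc k)
  have "n div 2 < n" using assms by simp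
  then have "i < n" using assms by linarith
  define M where "M = n - i - 1"
  have M: "n - i = Suc M" using \<open>i < n\<close> unfolding M_def by arith
  have n: "n = Suc M + Suc k" using M Suc assms by arith
  have key: "Suc k * (Suc M choose Suc k) = Suc M * (M choose k)" by (rule Suc_times_binomial)
  have "(of_nat n :: complex) * of_nat (Suc M choose Suc k) = of_nat (Suc M) * of_nat (Suc M choose Suc k) + of_nat (Suc M) * of_nat (M choose k)"
    unfolding n of_nat_mult[symmetric] of_nat_add[symmetric]
    by (metis key add_mult_distrib)
  then have "(of_nat n :: complex) / of_nat (Suc M) * of_nat (Suc M choose Suc k) = of_nat (Suc M choose Suc k) + of_nat (M choose k)"
    by (simp add: field_simps del: of_nat_Suc)
  then show ?thesis using M Suc by simp
qed

lemma psi_split: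
  assumes "n \<ge> 1"
  shows "(\<Sum>i=0..n div 2. (of_nat n / of_nat (n - i)) * of_nat ((n - i) choose i) * (-a)^i * (c::complex)^(n div 2 - i))
    = (\<Sum>i\<le>n div 2. of_nat ((n - i) choose i) * (-a)^i * c^(n div 2 - i))
    + (\<Sum>i\<le>n div 2. (if i = 0 then 0 else of_nat ((n - i - 1) choose (i - 1)) * (-a)^i * c^(n div 2 - i)))"
  unfolding atLeast0AtMost sum.distrib[symmetric]
proof (rule sum.cong[OF refl])
  fix i assume "i \<in> {..n div 2}"
  then have "i \<le> n div 2" by simp
  show "(of_nat n / of_nat (n - i)) * of_nat ((n - i) choose i) * (-a)^i * c^(n div 2 - i) =
    of_nat ((n - i) choose i) * (-a)^i * c^(n div 2 - i) + (if i = 0 then 0 else of_nat ((n - i - 1) choose (i - 1)) * (-a)^i * c^(n div 2 - i))"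
    unfolding coef[OF assms \<open>i \<le> n div 2\<close>] by (simp add: algebra_simps)
qed

theorem theorem5p2:
  fixes a b :: complex and n :: nat
  assumes "n \<ge> 1"
  shows "Psi a b n = (\<Sum>i=0..n div 2. (of_nat n / of_nat (n - i)) * of_nat ((n - i) choose i)
                         * (-a)^i * (2*a - b)^(n div 2 - i))
     \<and> Phi a b n = (\<Sum>i=0..(n - 1) div 2. of_nat ((n - i - 1) choose i)
                         * (-a)^i * (2*a - b)^((n - 1) div 2 - i))"
proof (cases "even n")
  case True
  then obtain m0 where m0: "n = 2*m0" by (rule evenE)
  with assms have "m0 \<noteq> 0" by auto
  then obtain m where "m0 = Suc m" using not0_implies_Suc by blast
  with m0 have m: "n = 2*m+2" by simp
  have P: "Phi a b n = (\<Sum>i=0..(n - 1) div 2. of_nat ((n - i - 1) choose i)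
                         * (-a)^i * (2*a - b)^((n - 1) div 2 - i))"
    using Phi_AB[of a b m] unfolding m Bsum_def atLeast0AtMost by (simp del: Phi.simps)
  have "Psi a b n = Asum a b (Suc m) - a * Asum a b m"
  proof -
    have e1: "Suc (Suc (Suc (2*m))) = 2*Suc m+1" "Suc (2*m) = 2*m+1" "Suc (Suc (2*m)) = n" using m by simp_all
    have "Psi a b (Suc (Suc (2*m))) = Phi a b (Suc (Suc (Suc (2*m)))) - a * Phi a b (Suc (2*m))"
      using Psi_Phi_aux by blast
    then have "Psi a b n = Phi a b (2*Suc m+1) - a * Phi a b (2*m+1)"
      by (simp add: m del: Psi.simps Phi.simps)
    then show ?thesis using Phi_AB[of a b m] Phi_AB[of a b "Suc m"] by (simp del: Psi.simps Phi.simps)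
  qed
  also have "\<dots> = (\<Sum>i=0..n div 2. (of_nat n / of_nat (n - i)) * of_nat ((n - i) choose i)
                         * (-a)^i * (2*a - b)^(n div 2 - i))"
    unfolding psi_split[OF assms]
  proof -
    have "n div 2 = Suc m" using m by simp
    then show "Asum a b (Suc m) - a * Asum a b m =
      (\<Sum>i\<le>n div 2. of_nat ((n - i) choose i) * (- a) ^ i * (2 * a - b) ^ (n div 2 - i)) +
      (\<Sum>i\<le>n div 2. if i = 0 then 0 else of_nat ((n - i - 1) choose (i - 1)) * (- a) ^ i * (2 * a - b) ^ (n div 2 - i))"
    proof -
      have S1: "(\<Sum>i\<le>n div 2. of_nat ((n - i) choose i) * (- a) ^ i * (2 * a - b) ^ (n div 2 - i)) = Asum a b (Suc m)"
        unfolding Asum_def using m by simp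
      have S2: "(\<Sum>i\<le>n div 2. if i = 0 then 0 else of_nat ((n - i - 1) choose (i - 1)) * (- a) ^ i * (2 * a - b) ^ (n div 2 - i)) = - a * Asum a b m"
        unfolding \<open>n div 2 = Suc m\<close> shift_if Asum_def sum_distrib_left
        by (rule sum.cong[OF refl]) (simp add: m algebra_simps)
      show ?thesis using S1 S2 by simp
    qed
  qed
  finally show ?thesis using P by simp
next
  case False
  then obtain m where m: "n = 2*m+1" using oddE by blast
  have P: "Phi a b n = (\<Sum>i=0..(n - 1) div 2. of_nat ((n - i - 1) choose i)
                         * (-a)^i * (2*a - b)^((n - 1) div 2 - i))"
    using Phi_AB[of a b m] unfolding m Asum_def atLeast0AtMost by (simp del: Phi.simps)
  have "Psi a b n = (\<Sum>i=0..n div 2. (of_nat n / of_nat (n - i)) * of_nat ((n - i) choose i)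
                         * (-a)^i * (2*a - b)^(n div 2 - i))"
  proof (cases m)
    case 0
    then show ?thesis using m by simp
  next
    case (Suc k)
    have "Psi a b n = Bsum a b (Suc k) - a * Bsum a b k"
    proof -
      have "Psi a b (Suc (Suc (Suc (2*k)))) = Phi a b (Suc (Suc (Suc (Suc (2*k))))) - a * Phi a b (Suc (Suc (2*k)))"
        using Psi_Phi_aux by blast
      then have "Psi a b n = Phi a b (2*Suc k+2) - a * Phi a b (2*k+2)"
        using m Suc by (simp del: Psi.simps Phi.simps)
      then show ?thesis using Phi_AB[of a b k] Phi_AB[of a b "Suc k"] by (simp del: Psi.simps Phi.simps)
    qed
    also have "\<dots> = (\<Sum>i=0..n div 2. (of_nat n / of_nat (n - i)) * of_nat ((n - i) choose i)
                         * (-a)^i * (2*a - b)^(n div 2 - i))"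
      unfolding psi_split[OF assms]
    proof -
      have "n div 2 = Suc k" using m Suc by simp
      then show "Bsum a b (Suc k) - a * Bsum a b k =
        (\<Sum>i\<le>n div 2. of_nat ((n - i) choose i) * (- a) ^ i * (2 * a - b) ^ (n div 2 - i)) +
        (\<Sum>i\<le>n div 2. if i = 0 then 0 else of_nat ((n - i - 1) choose (i - 1)) * (- a) ^ i * (2 * a - b) ^ (n div 2 - i))"
    proof -
      have S1: "(\<Sum>i\<le>n div 2. of_nat ((n - i) choose i) * (- a) ^ i * (2 * a - b) ^ (n div 2 - i)) = Bsum a b (Suc k)"
        unfolding Bsum_def using m Suc by simp
      have S2: "(\<Sum>i\<le>n div 2. if i = 0 then 0 else of_nat ((n - i - 1) choose (i - 1)) * (- a) ^ i * (2 * a - b) ^ (n div 2 - i)) = - a * Bsum a b k"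
        unfolding \<open>n div 2 = Suc k\<close> shift_if Bsum_def sum_distrib_left
        by (rule sum.cong[OF refl]) (simp add: m Suc algebra_simps)
      show ?thesis using S1 S2 by simp
    qed
    qed
    finally show ?thesis .
  qed
  then show ?thesis using P by simp
qed

end
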